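(* In one-to-one matching games with additive externalities, the optimistic pairwise stable set of a game coincides with its weak optimistic stable set.
   Context: Agents: $N=M\cup W$ with $M,W$ disjoint finite sets. A match is a pair $(m,w)$ with $m\in M$, $w\in W$; a one-to-one matching is a set of matches in which every agent appears in at most one match. Forming a match requires consent of both endpoints; severing can be done unilaterally. A game is $G=(M,W,\Pi)$ where $\Pi(m,w\mid z)\in\mathbb{R}$ is the value agent $z$ receives from the formation of match $(m,w)$; utility is $u(z,\mathcal{A})=\sum_{(m,w)\in\mathcal{A}}\Pi(m,w\mid z)$. A coalition $B\subseteq N$ deviates from $\mathcal{A}$ by rearranging matches among its members and deleting matches of its members with agents outside $B$ (keeping the result one-to-one), with every member performing at least one action (severing a match or forming a new match with another member of $B$). Under optimistic reasoning each member $i\in B$ evaluates the deviation assuming the agents in $N\setminus B$ organize themselves in the best possible way for $i$. The weak optimistic stable set is the set of one-to-one matchings for which no coalition has a deviation under which all its members strictly improve (under optimistic reasoning). The optimistic pairwise stable set is the set of one-to-one matchings with no blocking coalition of size one or two under optimistic reasoning (a single agent cutting its match; or two agents forming a new match with each other while possibly cutting previous matches, or coordinating to cut existing matches). *)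

theory Defs
  imports Complex_Main
begin

text \<open>Agents are of type 'a; the game is given by men M, women W (disjoint, finite)
  and the value function Pi, where Pi m w z is the value agent z receives from
  the formation of the match (m, w).\<close>

definition one_to_one :: "'a set \<Rightarrow> 'a set \<Rightarrow> ('a \<times> 'a) set \<Rightarrow> bool" where
  "one_to_one M W A \<longleftrightarrow> A \<subseteq> M \<times> W \<and>
     (\<forall>p\<in>A. \<forall>q\<in>A. (fst p = fst q \<longleftrightarrow> snd p = snd q))"

definition involves :: "'a \<Rightarrow> 'a \<times> 'a \<Rightarrow> bool" where
  "involves z p \<longleftrightarrow> fst p = z \<or> snd p = z"

definition util :: "('a \<Rightarrow> 'a \<Rightarrow> 'a \<Rightarrow> real) \<Rightarrow> 'a \<Rightarrow> ('a \<times> 'a) set \<Rightarrow> real" where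
  "util Pi z A = (\<Sum>p\<in>A. Pi (fst p) (snd p) z)"

text \<open>D is the set of matches involving members of coalition B after B deviates from A:
  B rearranges matches among its members and deletes matches of its members with
  outsiders (it may keep them, but cannot form new ones with outsiders); the result
  is one-to-one; every member performs at least one action (severs one of its
  matches or forms a new match with another member of B).\<close>
definition deviation :: "'a set \<Rightarrow> 'a set \<Rightarrow> ('a \<times> 'a) set \<Rightarrow> 'a set \<Rightarrow> ('a \<times> 'a) set \<Rightarrow> bool" where
  "deviation M W A B D \<longleftrightarrow>
     B \<noteq> {} \<and> B \<subseteq> M \<union> W \<and> one_to_one M W D \<and>
     (\<forall>p\<in>D. fst p \<in> B \<or> snd p \<in> B) \<and>
     (\<forall>p\<in>D. \<not> (fst p \<in> B \<and> snd p \<in> B) \<longrightarrow> p \<in> A) \<and>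
     (\<forall>i\<in>B. (\<exists>p\<in>A. involves i p \<and> p \<notin> D) \<or>
             (\<exists>p\<in>D. involves i p \<and> p \<notin> A \<and> fst p \<in> B \<and> snd p \<in> B))"

definition outsider_completions :: "'a set \<Rightarrow> 'a set \<Rightarrow> 'a set \<Rightarrow> ('a \<times> 'a) set \<Rightarrow> ('a \<times> 'a) set set" where
  "outsider_completions M W B D =
     {C. C \<subseteq> (M - B) \<times> (W - B) \<and> one_to_one M W (D \<union> C)}"

definition opt_value :: "'a set \<Rightarrow> 'a set \<Rightarrow> ('a \<Rightarrow> 'a \<Rightarrow> 'a \<Rightarrow> real) \<Rightarrow> 'a set \<Rightarrow>
    ('a \<times> 'a) set \<Rightarrow> 'a \<Rightarrow> real" where
  "opt_value M W Pi B D i = Max ((\<lambda>C. util Pi i (D \<union> C)) ` outsider_completions M W B D)"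

definition opt_blocking :: "'a set \<Rightarrow> 'a set \<Rightarrow> ('a \<Rightarrow> 'a \<Rightarrow> 'a \<Rightarrow> real) \<Rightarrow>
    ('a \<times> 'a) set \<Rightarrow> 'a set \<Rightarrow> bool" where
  "opt_blocking M W Pi A B \<longleftrightarrow>
     (\<exists>D. deviation M W A B D \<and> (\<forall>i\<in>B. opt_value M W Pi B D i > util Pi i A))"

definition weak_opt_stable_set :: "'a set \<Rightarrow> 'a set \<Rightarrow> ('a \<Rightarrow> 'a \<Rightarrow> 'a \<Rightarrow> real) \<Rightarrow>
    ('a \<times> 'a) set set" where
  "weak_opt_stable_set M W Pi = {A. one_to_one M W A \<and> (\<forall>B. \<not> opt_blocking M W Pi A B)}"

definition opt_pairwise_stable_set :: "'a set \<Rightarrow> 'a set \<Rightarrow> ('a \<Rightarrow> 'a \<Rightarrow> 'a \<Rightarrow> real) \<Rightarrow>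
    ('a \<times> 'a) set set" where
  "opt_pairwise_stable_set M W Pi =
     {A. one_to_one M W A \<and> (\<forall>B. card B \<le> 2 \<longrightarrow> \<not> opt_blocking M W Pi A B)}"

end

theory Submission
  imports Defs
begin

lemma compl_finite:
  assumes "finite M" "finite W"
  shows "finite (outsider_completions M W B D)"
proof -
  have "outsider_completions M W B D \<subseteq> Pow (M \<times> W)"
    unfolding outsider_completions_def by auto
  thus ?thesis using assms by (meson finite_Pow_iff finite_SigmaI finite_subset)
qed

lemma compl_ne:
  assumes "one_to_one M W D"
  shows "{} \<in> outsider_completions M W B D"
  using assms unfolding outsider_completions_def by auto

lemma opt_ge:
  assumes "finite M" "finite W" "C \<in> outsider_completions M W B D"
  shows "util Pi i (D \<union> C) \<le> opt_value M W Pi B D i"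
  unfolding opt_value_def using assms compl_finite[OF assms(1,2), of B D] by (intro Max_ge) auto

lemma opt_att:
  assumes "finite M" "finite W" "one_to_one M W D"
  shows "\<exists>C\<in>outsider_completions M W B D. opt_value M W Pi B D i = util Pi i (D \<union> C)"
proof -
  have "opt_value M W Pi B D i \<in> (\<lambda>C. util Pi i (D \<union> C)) ` outsider_completions M W B D"
    unfolding opt_value_def using compl_finite[OF assms(1,2), of B D] compl_ne[OF assms(3), of B]
    by (intro Max_in) auto
  thus ?thesis by auto
qed

theorem theorem14:
  fixes M W :: "'a set" and Pi :: "'a \<Rightarrow> 'a \<Rightarrow> 'a \<Rightarrow> real"
  assumes "finite M" and "finite W" and "M \<inter> W = {}"
  shows "opt_pairwise_stable_set M W Pi = weak_opt_stable_set M W Pi"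
proof
  show "weak_opt_stable_set M W Pi \<subseteq> opt_pairwise_stable_set M W Pi"
    unfolding weak_opt_stable_set_def opt_pairwise_stable_set_def by auto
next
  show "opt_pairwise_stable_set M W Pi \<subseteq> weak_opt_stable_set M W Pi"
  proof
    fix A assume "A \<in> opt_pairwise_stable_set M W Pi"
    hence oA: "one_to_one M W A" and st: "\<And>B. card B \<le> 2 \<Longrightarrow> \<not> opt_blocking M W Pi A B"
      unfolding opt_pairwise_stable_set_def by auto
    have "\<not> opt_blocking M W Pi A B" for B
    proof
      assume "opt_blocking M W Pi A B"
      then obtain D where dev: "deviation M W A B D"
        and imp: "\<And>i. i \<in> B \<Longrightarrow> opt_value M W Pi B D i > util Pi i A"
        unfolding opt_blocking_def by auto
      from dev have Bne: "B \<noteq> {}" and BMW: "B \<subseteq> M \<union> W" and oD: "one_to_one M W D"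
        and D1: "\<forall>p\<in>D. fst p \<in> B \<or> snd p \<in> B"
        and D2: "\<forall>p\<in>D. \<not> (fst p \<in> B \<and> snd p \<in> B) \<longrightarrow> p \<in> A"
        and act: "\<forall>i\<in>B. (\<exists>p\<in>A. involves i p \<and> p \<notin> D) \<or>
             (\<exists>p\<in>D. involves i p \<and> p \<notin> A \<and> fst p \<in> B \<and> snd p \<in> B)"
        unfolding deviation_def by auto
      have DMW: "D \<subseteq> M \<times> W" using oD unfolding one_to_one_def by auto
      have AMW: "A \<subseteq> M \<times> W" using oA unfolding one_to_one_def by auto
      obtain i where iB: "i \<in> B" using Bne by auto
      show False
      proof (cases "\<exists>p\<in>D. involves i p")
        case False
        with act iB obtain p where pA: "p \<in> A" "involves i p" by auto
        have devi: "deviation M W A {i} {}"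
          unfolding deviation_def one_to_one_def using iB BMW pA by auto
        obtain C where C: "C \<in> outsider_completions M W B D"
          and Ceq: "opt_value M W Pi B D i = util Pi i (D \<union> C)"
          using opt_att[OF assms(1,2) oD] by blast
        have "D \<union> C \<in> outsider_completions M W {i} {}"
          using C False DMW unfolding outsider_completions_def involves_def
          by (auto simp: iB)
        hence "util Pi i ({} \<union> (D \<union> C)) \<le> opt_value M W Pi {i} {} i"
          using opt_ge[OF assms(1,2)] by blast
        hence "opt_value M W Pi {i} {} i > util Pi i A" using Ceq imp[OF iB] by simp
        hence "opt_blocking M W Pi A {i}" unfolding opt_blocking_def using devi by auto
        thus False using st[of "{i}"] by simp
      next
        case True
        then obtain p where pD: "p \<in> D" and ip: "involves i p" by auto
        have pnA: "p \<notin> A"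
        proof
          assume pA: "p \<in> A"
          have "(\<exists>q\<in>A. involves i q \<and> q \<notin> D) \<or>
             (\<exists>q\<in>D. involves i q \<and> q \<notin> A \<and> fst q \<in> B \<and> snd q \<in> B)"
            using act iB by blast
          then show False
          proof
            assume "\<exists>q\<in>A. involves i q \<and> q \<notin> D"
            then obtain q where "q \<in> A" "involves i q" "q \<noteq> p" using pD by auto
            thus False using oA pA ip AMW assms(3) unfolding one_to_one_def involves_def
              by (metis disjoint_iff mem_Sigma_iff prod.collapse subsetD)
          next
            assume "\<exists>q\<in>D. involves i q \<and> q \<notin> A \<and> fst q \<in> B \<and> snd q \<in> B"
            then obtain q where "q \<in> D" "involves i q" "q \<noteq> p" using pA by auto
            thus False using oD pD ip DMW assms(3) unfolding one_to_one_def involves_def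
              by (metis disjoint_iff mem_Sigma_iff prod.collapse subsetD)
          qed
        qed
        hence pB: "fst p \<in> B" "snd p \<in> B" using D2 pD by auto
        obtain m w where pmw: "p = (m, w)" by (cases p)
        have mM: "m \<in> M" and wW: "w \<in> W" using DMW pD pmw by auto
        let ?B = "{m, w}"
        have devp: "deviation M W A ?B {p}"
          unfolding deviation_def one_to_one_def involves_def
          using pmw mM wW pnA by auto
        have "opt_value M W Pi ?B {p} j > util Pi j A" if jB: "j \<in> ?B" for j
        proof -
          have jB': "j \<in> B" using jB pB pmw by auto
          obtain C where C: "C \<in> outsider_completions M W B D"
            and Ceq: "opt_value M W Pi B D j = util Pi j (D \<union> C)"
            using opt_att[OF assms(1,2) oD] by blast
          have other: "q \<in> D \<Longrightarrow> q \<noteq> p \<Longrightarrow> fst q \<noteq> m \<and> fst q \<noteq> w \<and> snd q \<noteq> m \<and> snd q \<noteq> w" for q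
          proof -
            assume qD: "q \<in> D" "q \<noteq> p"
            have "fst q \<in> M" "snd q \<in> W" using qD DMW by auto
            moreover have "fst q \<noteq> m" using oD qD pD pmw unfolding one_to_one_def
              by (metis fst_conv prod.collapse snd_conv)
            moreover have "snd q \<noteq> w" using oD qD pD pmw unfolding one_to_one_def
              by (metis fst_conv prod.collapse snd_conv)
            ultimately show ?thesis using mM wW assms(3) by auto
          qed
          have eq: "{p} \<union> ((D - {p}) \<union> C) = D \<union> C" using pD by auto
          have "(D - {p}) \<union> C \<in> outsider_completions M W ?B {p}"
          proof -
            have "D - {p} \<subseteq> (M - ?B) \<times> (W - ?B)"
            proof
              fix q assume "q \<in> D - {p}"
              thus "q \<in> (M - ?B) \<times> (W - ?B)" using other[of q] DMW
                by (cases q) auto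
            qed
            moreover have "C \<subseteq> (M - ?B) \<times> (W - ?B)" using C pB pmw
              unfolding outsider_completions_def by auto
            moreover have "one_to_one M W ({p} \<union> ((D - {p}) \<union> C))"
              using eq C unfolding outsider_completions_def by simp
            ultimately show ?thesis unfolding outsider_completions_def by auto
          qed
          hence "util Pi j ({p} \<union> ((D - {p}) \<union> C)) \<le> opt_value M W Pi ?B {p} j"
            using opt_ge[OF assms(1,2)] by blast
          thus ?thesis using eq Ceq imp[OF jB'] by simp
        qed
        hence "opt_blocking M W Pi A ?B" unfolding opt_blocking_def using devp by auto
        moreover have "card ?B \<le> 2" by (simp add: card_insert_le_m1)
        ultimately show False using st by blast
      qed
    qed
    thus "A \<in> weak_opt_stable_set M W Pi" unfolding weak_opt_stable_set_def using oA by auto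
  qed
qed

end
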